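(* Let $(X,\mu)$ be a probability measure space, $0<q<1$, $w:X\to[0,\infty)$ measurable, and for each $n\in\mathbb{N}$ let $X_n\subseteq X$ be measurable and $w_n:X_n\to\mathbb{R}^+$ measurable with $w_n\ge w$ on $X_n$. Suppose $\lim_n\int_{X_n}w_n^q\,d\mu$ and $\lim_n\int_{X_n}w^q\,d\mu$ exist as real numbers and are equal. Then $\lim_n\int_{X_n}(w_n-w)^q\,d\mu=0$. *)

theory Defs
  imports "HOL-Probability.Probability"
begin

end

theory Submission imports Defs begin

lemma decr:
  fixes q s t :: real
  assumes "0 < q" "q < 1" "0 \<le> s" "s \<le> t"
  shows "(1+t) powr q - t powr q \<le> (1+s) powr q - s powr q"
proof (rule DERIV_nonpos_imp_decreasing_open[OF assms(4), where f="\<lambda>x. (1+x) powr q - x powr q"])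
  fix x assume x: "s < x" "x < t"
  hence xp: "x > 0" using assms by auto
  have "((\<lambda>x. (1+x) powr q - x powr q) has_real_derivative (q * (1+x) powr (q-1) - q * x powr (q-1))) (at x)"
    using xp by (auto intro!: derivative_eq_intros)
  moreover have "(1+x) powr (q-1) \<le> x powr (q-1)"
    using xp assms by (intro powr_mono2') auto
  hence "q * (1+x) powr (q-1) - q * x powr (q-1) \<le> 0" using assms
    by (simp add: mult_left_mono)
  ultimately show "\<exists>y. ((\<lambda>x. (1+x) powr q - x powr q) has_real_derivative y) (at x) \<and> y \<le> 0" by blast
next
  show "continuous_on {s..t} (\<lambda>x. (1+x) powr q - x powr q)"
    using assms by (intro continuous_intros continuous_on_powr') auto
qed

lemma key:
  fixes q a d K :: real
  assumes q: "0 < q" "q < 1" and a: "0 \<le> a" and d: "0 \<le> d" and K: "0 < K"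
  defines "C \<equiv> 1 / ((1+K) powr q - K powr q)"
  shows "d powr q + C * a powr q \<le> (1/K) powr q * a powr q + C * (a+d) powr q"
proof -
  have cpos: "(1+K) powr q - K powr q > 0" using q K by (simp add: powr_less_mono2)
  hence Cpos: "C > 0" unfolding C_def by simp
  have mono: "a powr q \<le> (a+d) powr q" using a d q by (intro powr_mono2) auto
  show ?thesis
  proof (cases "a \<le> K * d")
    case True
    show ?thesis
    proof (cases "d = 0")
      case True then show ?thesis using q a by simp
    next
      case False
      hence dp: "d > 0" using d by simp
      define t where "t = a / d"
      have t0: "0 \<le> t" and tK: "t \<le> K" using True a dp by (auto simp: t_def field_simps)
      have ad: "a = t * d" using dp by (simp add: t_def)
      have "(1+K) powr q - K powr q \<le> (1+t) powr q - t powr q"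
        using decr[OF q t0 tK] .
      hence "d powr q * ((1+K) powr q - K powr q) \<le> d powr q * ((1+t) powr q - t powr q)"
        by (simp add: mult_left_mono)
      also have "\<dots> = (a+d) powr q - a powr q"
        using t0 dp by (simp add: ad algebra_simps powr_mult[symmetric] distrib_left)
      finally have "d powr q \<le> C * ((a+d) powr q - a powr q)"
        using cpos unfolding C_def by (simp add: field_simps)
      moreover have "0 \<le> (1/K) powr q * a powr q" by simp
      moreover have "C * ((a+d) powr q - a powr q) = C*(a+d) powr q - C * a powr q" by (simp add: right_diff_distrib)
      ultimately show ?thesis by linarith
    qed
  next
    case False
    hence "d \<le> a / K" using K by (simp add: field_simps)
    hence "d powr q \<le> (a/K) powr q" using d q by (intro powr_mono2) auto
    also have "\<dots> = (1/K) powr q * a powr q" using a K by (simp add: powr_divide powr_mult[symmetric])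
    finally show ?thesis using mono Cpos by (smt (verit) mult_left_mono)
  qed
qed

theorem lemma5p2:
  fixes M :: "'a measure" and q L :: real and w :: "'a \<Rightarrow> real"
    and X :: "nat \<Rightarrow> 'a set" and wn :: "nat \<Rightarrow> 'a \<Rightarrow> real"
  assumes "prob_space M"
    and "0 < q" and "q < 1"
    and "w \<in> borel_measurable M"
    and "\<And>x. x \<in> space M \<Longrightarrow> w x \<ge> 0"
    and "\<And>n. X n \<in> sets M"
    and "\<And>n. wn n \<in> borel_measurable (restrict_space M (X n))"
    and "\<And>n x. x \<in> X n \<Longrightarrow> wn n x > 0"
    and "\<And>n x. x \<in> X n \<Longrightarrow> wn n x \<ge> w x"
    and "(\<lambda>n. \<integral>\<^sup>+ x \<in> X n. ennreal (wn n x powr q) \<partial>M) \<longlonglongrightarrow> ennreal L"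
    and "(\<lambda>n. \<integral>\<^sup>+ x \<in> X n. ennreal (w x powr q) \<partial>M) \<longlonglongrightarrow> ennreal L"
    and "L \<ge> 0"
  shows "(\<lambda>n. \<integral>\<^sup>+ x \<in> X n. ennreal ((wn n x - w x) powr q) \<partial>M) \<longlonglongrightarrow> 0"
proof -
  note q = assms(2,3)
  define F where "F n = (\<integral>\<^sup>+ x \<in> X n. ennreal (wn n x powr q) \<partial>M)" for n
  define G where "G n = (\<integral>\<^sup>+ x \<in> X n. ennreal (w x powr q) \<partial>M)" for n
  define H where "H n = (\<integral>\<^sup>+ x \<in> X n. ennreal ((wn n x - w x) powr q) \<partial>M)" for n
  define N where "N n = restrict_space M (X n)" for n
  have sp: "X n \<inter> space M \<in> sets M" for n using assms(6) by (simp add: sets.Int_space_eq2)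
  have spN: "space (N n) = X n" for n
    using assms(6)[of n] sets.sets_into_space unfolding N_def by (auto simp: space_restrict_space)
  have RN: "nn_integral (N n) f = (\<integral>\<^sup>+ x \<in> X n. f x \<partial>M)" for n f
    unfolding N_def by (rule nn_integral_restrict_space[OF sp])
  have wN: "w \<in> borel_measurable (N n)" for n
    unfolding N_def using assms(4) by (rule measurable_restrict_space1)
  have wnN: "wn n \<in> borel_measurable (N n)" for n using assms(7) unfolding N_def .
  have w0: "x \<in> space (N n) \<Longrightarrow> w x \<ge> 0" for n x
    using assms(5,6) sets.sets_into_space spN by blast
  have ineq: "H n + ennreal C * G n \<le> ennreal ((1/K) powr q) * G n + ennreal C * F n"
    if K: "K > 0" and C: "C = 1 / ((1+K) powr q - K powr q)" for n K C
  proof -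
    have Cpos: "C > 0" using C q K by (simp add: powr_less_mono2)
    have "H n + ennreal C * G n = nn_integral (N n) (\<lambda>x. ennreal ((wn n x - w x) powr q)) + ennreal C * nn_integral (N n) (\<lambda>x. ennreal (w x powr q))"
      unfolding H_def G_def RN ..
    also have "\<dots> = nn_integral (N n) (\<lambda>x. ennreal ((wn n x - w x) powr q) + ennreal C * ennreal (w x powr q))"
      using wN wnN by (subst nn_integral_add) (auto simp: nn_integral_cmult)
    also have "\<dots> \<le> nn_integral (N n) (\<lambda>x. ennreal ((1/K) powr q) * ennreal (w x powr q) + ennreal C * ennreal (wn n x powr q))"
    proof (rule nn_integral_mono)
      fix x assume x: "x \<in> space (N n)"
      have a: "0 \<le> w x" using w0[OF x] .
      have d: "0 \<le> wn n x - w x" using assms(9)[of x n] x spN by auto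
      have "(wn n x - w x) powr q + C * w x powr q \<le> (1/K) powr q * w x powr q + C * (w x + (wn n x - w x)) powr q"
        using key[OF q a d K] C by simp
      thus "ennreal ((wn n x - w x) powr q) + ennreal C * ennreal (w x powr q) \<le> ennreal ((1/K) powr q) * ennreal (w x powr q) + ennreal C * ennreal (wn n x powr q)"
        using Cpos by (simp add: ennreal_mult[symmetric] ennreal_plus[symmetric] del: ennreal_plus)
    qed
    also have "\<dots> = ennreal ((1/K) powr q) * G n + ennreal C * F n"
      unfolding G_def F_def RN[symmetric]
      using wN wnN by (subst nn_integral_add) (auto simp: nn_integral_cmult)
    finally show ?thesis .
  qed
  have Ft: "F \<longlonglongrightarrow> ennreal L" using assms(10) unfolding F_def .
  have Gt: "G \<longlonglongrightarrow> ennreal L" using assms(11) unfolding G_def .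
  have evF: "eventually (\<lambda>n. F n < top) sequentially"
    using order_tendstoD(2)[OF Ft] by simp
  have evG: "eventually (\<lambda>n. G n < top) sequentially"
    using order_tendstoD(2)[OF Gt] by simp
  define f where "f n = enn2real (F n)" for n
  define g where "g n = enn2real (G n)" for n
  define h where "h n = enn2real (H n)" for n
  have ft: "f \<longlonglongrightarrow> L" unfolding f_def using Ft assms(12) by (intro tendsto_enn2real)
  have gt: "g \<longlonglongrightarrow> L" unfolding g_def using Gt assms(12) by (intro tendsto_enn2real)
  have C1: "1 / ((1+(1::real)) powr q - 1 powr q) > 0" using q by (simp add: powr_less_mono2)
  have evH: "eventually (\<lambda>n. H n < top) sequentially"
    using evF evG
  proof eventually_elim
    case (elim n)
    have "H n \<le> H n + ennreal (1 / ((1+1) powr q - 1 powr q)) * G n" by simp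
    also have "\<dots> \<le> ennreal ((1/1) powr q) * G n + ennreal (1 / ((1+1) powr q - 1 powr q)) * F n"
      by (rule ineq) auto
    also have "\<dots> < top" using elim by (simp add: ennreal_mult_less_top)
    finally show ?case .
  qed
  have bound: "eventually (\<lambda>n. h n \<le> (1/K) powr q * g n + C * (f n - g n)) sequentially"
    if K: "K > 0" and C: "C = 1 / ((1+K) powr q - K powr q)" for K C
    using evF evG evH
  proof eventually_elim
    case (elim n)
    have Cpos: "C > 0" using C q K by (simp add: powr_less_mono2)
    have eF: "F n = ennreal (f n)" and eG: "G n = ennreal (g n)" and eH: "H n = ennreal (h n)"
      using elim by (auto simp: f_def g_def h_def ennreal_enn2real_if less_top)
    have nn: "f n \<ge> 0" "g n \<ge> 0" "h n \<ge> 0" by (auto simp: f_def g_def h_def)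
    have "ennreal (h n + C * g n) \<le> ennreal ((1/K) powr q * g n + C * f n)"
      using ineq[OF K C, of n] nn Cpos unfolding eF eG eH
      by (simp add: ennreal_mult[symmetric] ennreal_plus[symmetric] del: ennreal_plus)
    hence "h n + C * g n \<le> (1/K) powr q * g n + C * f n"
      using nn Cpos by (subst (asm) ennreal_le_iff) auto
    thus ?case by (simp add: algebra_simps)
  qed
  have ht: "h \<longlonglongrightarrow> 0"
  proof (rule order_tendstoI)
    fix y :: real assume "y < 0"
    have "\<And>n. y < h n" using \<open>y < 0\<close> enn2real_nonneg[of "H _"] unfolding h_def by (meson less_le_trans)
    thus "eventually (\<lambda>n. y < h n) sequentially" by simp
  next
    fix y :: real assume y: "0 < y"
    define \<epsilon> where "\<epsilon> = y / (L + 1)"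
    have ep: "\<epsilon> > 0" using y assms(12) by (simp add: \<epsilon>_def)
    have epL: "\<epsilon> * L < y" using y assms(12) by (simp add: \<epsilon>_def field_simps)
    define K where "K = 1 / \<epsilon> powr (1/q)"
    have Kp: "K > 0" using ep by (simp add: K_def)
    have "(1/K) powr q = \<epsilon>" using ep q by (simp add: K_def powr_powr)
    define C where "C = 1 / ((1+K) powr q - K powr q)"
    have "(\<lambda>n. (1/K) powr q * g n + C * (f n - g n)) \<longlonglongrightarrow> (1/K) powr q * L + C * (L - L)"
      by (intro tendsto_intros ft gt)
    hence "(\<lambda>n. (1/K) powr q * g n + C * (f n - g n)) \<longlonglongrightarrow> \<epsilon> * L"
      using \<open>(1/K) powr q = \<epsilon>\<close> by simp
    from order_tendstoD(2)[OF this epL] bound[OF Kp C_def]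
    show "eventually (\<lambda>n. h n < y) sequentially"
      by eventually_elim auto
  qed
  have "(\<lambda>n. ennreal (h n)) \<longlonglongrightarrow> 0" using tendsto_ennrealI[OF ht] by simp
  moreover have "eventually (\<lambda>n. ennreal (h n) = H n) sequentially" using evH
      by eventually_elim (auto simp: h_def ennreal_enn2real_if less_top)
  ultimately have "H \<longlonglongrightarrow> 0" using Lim_transform_eventually by blast
  thus ?thesis unfolding H_def .
qed

end
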